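(* Let $(X,d,\mu)$ be geometrically doubling and upper doubling with fixed dominating function $\lambda$. For $\varrho>1$ denote by $\mathrm{RBMO}_\varrho(\mu)$ the space $\mathrm{RBMO}(\mu)$ defined with parameter $\varrho$. Then $\mathrm{RBMO}_\varrho(\mu)$ does not depend on $\varrho$: for all $\varrho,\sigma>1$, $\mathrm{RBMO}_\varrho(\mu)=\mathrm{RBMO}_\sigma(\mu)$.
   Context: Balls $B=B(x,r)=\{y:d(y,x)<r\}$ have specified centre $c_B=x$ and radius $r_B=r>0$; $tB:=B(x,tr)$. Geometrically doubling: there is $N$ such that every ball $B(x,r)$ is covered by at most $N$ balls of radius $r/2$. Upper doubling: $\mu$ is a Borel measure, finite on bounded sets, and there are $\lambda:X\times(0,\infty)\to(0,\infty)$ and $C_\lambda$ with $r\mapsto\lambda(x,r)$ non-decreasing, $\lambda(x,2r)\le C_\lambda\lambda(x,r)$, $\mu(B(x,r))\le\lambda(x,r)$. A function $f\in L^1_{\mathrm{loc}}(\mu)$ (integrable on bounded sets) belongs to $\mathrm{RBMO}_\varrho(\mu)$ if there exist a number $A$ and, for every ball $B$, a number $f_B$ such that $\frac{1}{\mu(\varrho B)}\int_B|f-f_B|\,d\mu\le A$ for every ball $B$, and whenever $B\subset B_1$ are balls, $|f_B-f_{B_1}|\le A\{1+\int_{2B_1\setminus B}\frac{d\mu(x)}{\lambda(c_B,d(x,c_B))}\}$. The infimum of admissible $A$ is the norm $\|f\|_{\mathrm{RBMO}_\varrho}$. *)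

theory Defs
  imports "HOL-Analysis.Analysis"
begin

definition geom_doubling :: "'a::metric_space itself \<Rightarrow> bool" where
  "geom_doubling _ \<longleftrightarrow> (\<exists>N::nat. \<forall>(x::'a) r. r > 0 \<longrightarrow>
     (\<exists>C. finite C \<and> card C \<le> N \<and> ball x r \<subseteq> (\<Union>c\<in>C. ball c (r/2))))"

definition upper_doubling :: "'a::metric_space measure \<Rightarrow> ('a \<Rightarrow> real \<Rightarrow> real) \<Rightarrow> bool" where
  "upper_doubling mu lam \<longleftrightarrow>
     sets mu = sets borel \<and>
     (\<forall>B. bounded B \<and> B \<in> sets borel \<longrightarrow> emeasure mu B < \<infinity>) \<and>
     (\<forall>x r. r > 0 \<longrightarrow> lam x r > 0) \<and>
     (\<forall>x. mono_on {0<..} (lam x)) \<and>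
     (\<exists>C. \<forall>x r. r > 0 \<longrightarrow> lam x (2*r) \<le> C * lam x r) \<and>
     (\<forall>x r. r > 0 \<longrightarrow> measure mu (ball x r) \<le> lam x r)"

definition loc_integrable :: "'a::metric_space measure \<Rightarrow> ('a \<Rightarrow> real) \<Rightarrow> bool" where
  "loc_integrable mu f \<longleftrightarrow> (\<forall>B. bounded B \<and> B \<in> sets borel \<longrightarrow> set_integrable mu B f)"

text \<open>The condition (1/mu(rho B)) int_B |f - f_B| <= A is written multiplied out
  (if mu(rho B)=0 then also mu(B)=0 and both sides vanish).\<close>
definition RBMO_admissible ::
  "'a::metric_space measure \<Rightarrow> ('a \<Rightarrow> real \<Rightarrow> real) \<Rightarrow> real \<Rightarrow> ('a \<Rightarrow> real)
     \<Rightarrow> real \<Rightarrow> ('a \<Rightarrow> real \<Rightarrow> real) \<Rightarrow> bool" where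
  "RBMO_admissible mu lam rho f A fB \<longleftrightarrow>
     (\<forall>x r. r > 0 \<longrightarrow>
        (\<integral>y\<in>ball x r. \<bar>f y - fB x r\<bar> \<partial>mu) \<le> A * measure mu (ball x (rho * r))) \<and>
     (\<forall>x r x1 r1. r > 0 \<longrightarrow> r1 > 0 \<longrightarrow> ball x r \<subseteq> ball x1 r1 \<longrightarrow>
        \<bar>fB x r - fB x1 r1\<bar> \<le>
          A * (1 + (\<integral>y\<in>ball x1 (2*r1) - ball x r. 1 / lam x (dist y x) \<partial>mu)))"

definition RBMO :: "'a::metric_space measure \<Rightarrow> ('a \<Rightarrow> real \<Rightarrow> real) \<Rightarrow> real \<Rightarrow> ('a \<Rightarrow> real) set" where
  "RBMO mu lam rho = {f. loc_integrable mu f \<and> (\<exists>A fB. RBMO_admissible mu lam rho f A fB)}"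

end

theory Submission
  imports Defs
begin

lemma ud_props:
  assumes "upper_doubling mu lam"
  shows "sets mu = sets borel" "\<And>x r. r > 0 \<Longrightarrow> lam x r > 0"
    "\<And>x a b. 0 < a \<Longrightarrow> a \<le> b \<Longrightarrow> lam x a \<le> lam x b"
    "\<And>x r. r > 0 \<Longrightarrow> measure mu (ball x r) \<le> lam x r"
    "\<And>B. bounded B \<Longrightarrow> B \<in> sets borel \<Longrightarrow> B \<in> fmeasurable mu"
  using assms unfolding upper_doubling_def
  apply auto
  apply (meson mono_onD greaterThan_iff less_le_trans)
  apply (simp add: fmeasurable_def)
  done

lemma cover_iter:
  assumes "geom_doubling TYPE('a::metric_space)"
  shows "\<exists>N::nat. \<forall>k (x::'a) r. r > 0 \<longrightarrow> (\<exists>C. finite C \<and> card C \<le> N^k \<and> ball x r \<subseteq> (\<Union>c\<in>C. ball c (r/2^k)))"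
proof -
  obtain N :: nat where N: "\<forall>(x::'a) r. r > 0 \<longrightarrow>
     (\<exists>C. finite C \<and> card C \<le> N \<and> ball x r \<subseteq> (\<Union>c\<in>C. ball c (r/2)))"
    using assms unfolding geom_doubling_def by blast
  have "\<forall>(x::'a) r. r > 0 \<longrightarrow> (\<exists>C. finite C \<and> card C \<le> N^k \<and> ball x r \<subseteq> (\<Union>c\<in>C. ball c (r/2^k)))" for k
  proof (induction k)
    case 0
    show ?case
    proof (intro allI impI)
      fix x :: 'a and r :: real assume "r > 0"
      then show "\<exists>C. finite C \<and> card C \<le> N^0 \<and> ball x r \<subseteq> (\<Union>c\<in>C. ball c (r/2^0))"
        by (intro exI[of _ "{x}"]) auto
    qed
  next
    case (Suc k)
    show ?case
    proof (intro allI impI)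
      fix x :: 'a and r :: real assume r: "r > 0"
      obtain C where C: "finite C" "card C \<le> N^k" "ball x r \<subseteq> (\<Union>c\<in>C. ball c (r/2^k))"
        using Suc r by blast
      have "\<forall>c::'a. \<exists>D. finite D \<and> card D \<le> N \<and> ball c (r/2^k) \<subseteq> (\<Union>d\<in>D. ball d (r/2^k/2))"
      proof
        fix c :: 'a show "\<exists>D. finite D \<and> card D \<le> N \<and> ball c (r/2^k) \<subseteq> (\<Union>d\<in>D. ball d (r/2^k/2))"
          using spec[OF spec[OF N, of c], of "r/2^k"] r by simp
      qed
      from choice[OF this] obtain D :: "'a \<Rightarrow> 'a set" where D0: "\<forall>c. finite (D c) \<and> card (D c) \<le> N \<and> ball c (r/2^k) \<subseteq> (\<Union>d\<in>D c. ball d (r/2^k/2))"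
        by blast
      have D: "\<And>c. finite (D c)" "\<And>c. card (D c) \<le> N"
         "\<And>c. ball c (r/2^k) \<subseteq> (\<Union>d\<in>D c. ball d (r/2^k/2))" using D0 by auto
      have "card (\<Union>c\<in>C. D c) \<le> (\<Sum>c\<in>C. card (D c))" by (rule card_UN_le[OF C(1)])
      also have "\<dots> \<le> card C * N" using sum_bounded_above[of C "\<lambda>c. card (D c)" N] D(2) by simp
      also have "\<dots> \<le> N^k * N" using C(2) by simp
      finally have "card (\<Union>c\<in>C. D c) \<le> N^Suc k" by (simp add: mult.commute)
      moreover have "ball x r \<subseteq> (\<Union>d\<in>(\<Union>c\<in>C. D c). ball d (r/2^Suc k))"
      proof
        fix z assume "z \<in> ball x r"
        then obtain c where c: "c \<in> C" "z \<in> ball c (r/2^k)" using C(3) by blast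
        then obtain d where d: "d \<in> D c" "z \<in> ball d (r/2^k/2)" using D(3)[of c] by blast
        have "r/2^k/2 = r/2^Suc k" by simp
        then show "z \<in> (\<Union>d\<in>(\<Union>c\<in>C. D c). ball d (r/2^Suc k))" using c d by (auto simp: mult.commute)
      qed
      ultimately show "\<exists>C. finite C \<and> card C \<le> N^Suc k \<and> ball x r \<subseteq> (\<Union>c\<in>C. ball c (r/2^Suc k))"
        using C(1) D(1) by blast
    qed
  qed
  then show ?thesis by blast
qed

lemma dyadic_index:
  fixes d s :: real
  assumes "s > 0" "s \<le> d" "d < 2^m * s"
  shows "\<exists>j<m. 2^j * s \<le> d \<and> d < 2^Suc j * s"
proof -
  define P where "P j \<longleftrightarrow> d < 2^j * s" for j :: nat
  have Pm: "P m" using assms by (simp add: P_def)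
  define j' where "j' = (LEAST j. P j)"
  have Pj': "P j'" unfolding j'_def by (rule LeastI[of P m, OF Pm])
  have j'm: "j' \<le> m" unfolding j'_def by (rule Least_le[of P m, OF Pm])
  have "\<not> P 0" using assms by (simp add: P_def)
  then have j'0: "j' \<noteq> 0" using Pj' by (metis)
  have "\<not> P (j' - 1)" unfolding j'_def by (rule not_less_Least) (use j'0 in \<open>simp add: j'_def\<close>)
  moreover have "Suc (j' - 1) = j'" using j'0 by simp
  ultimately show ?thesis using Pj' j'm j'0
    by (intro exI[of _ "j' - 1"]) (auto simp: P_def not_less)
qed

lemma annulus:
  fixes mu :: "'a::metric_space measure" and C :: real
  assumes ud: "upper_doubling mu lam" and C: "\<And>x r. r>0 \<Longrightarrow> lam x (2*r) \<le> C * lam x r"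
    and s: "s>0" and S: "S \<in> sets borel" "S \<subseteq> ball y (2^m * s) - ball y s"
  shows "(\<integral>z\<in>S. 1 / lam y (dist z y) \<partial>mu) \<le> real m * C"
proof -
  note P = ud_props[OF ud]
  have "lam y (2*1) \<le> C * lam y 1" using C[of 1 y] by simp
  moreover have "lam y 2 > 0" "lam y 1 > 0" using P(2) by auto
  ultimately have Cpos: "C > 0" by (smt (verit) mult_nonpos_nonneg)
  have spc: "space mu = UNIV" using sets_eq_imp_space_eq[OF P(1)] by simp
  define F where "F z = indicator S z *\<^sub>R (1 / lam y (dist z y))" for z
  define A where "A j = ball y (2^Suc j * s) - ball y (2^j * s)" for j :: nat
  define G where "G z = (\<Sum>j<m. indicator (A j) z * (1/lam y (2^j * s)))" for z
  have int_eq: "(\<integral>z\<in>S. 1 / lam y (dist z y) \<partial>mu) = integral\<^sup>L mu F"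
    unfolding set_lebesgue_integral_def F_def by simp
  have Afm: "A j \<in> fmeasurable mu" for j
    unfolding A_def by (rule P(5)) (auto intro: bounded_subset[OF bounded_ball])
  have lampos: "lam y (2^j * s) > 0" for j :: nat using P(2) s by simp
  show ?thesis
  proof (cases "integrable mu F")
    case False
    then show ?thesis using int_eq Cpos by (simp add: not_integrable_integral_eq)
  next
    case True
    have intA: "integrable mu (indicator (A j) :: 'a \<Rightarrow> real)" for j
      using Afm[of j] by (auto simp: fmeasurable_def)
    have intG: "integrable mu G" unfolding G_def
      proof (rule Bochner_Integration.integrable_sum)
      fix j show "integrable mu (\<lambda>z. indicator (A j) z * (1/lam y (2^j * s)))"
        using intA[of j] by simp
    qed
    have FG: "F z \<le> G z" for z
    proof (cases "z \<in> S")
      case False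
      then have "F z = 0" by (simp add: F_def)
      moreover have "G z \<ge> 0" unfolding G_def using lampos
        by (intro sum_nonneg mult_nonneg_nonneg) (auto simp: less_imp_le)
      ultimately show ?thesis by simp
    next
      case True
      then have d: "s \<le> dist z y" "dist z y < 2^m * s" using S(2) by (auto simp: dist_commute)
      obtain j where j: "j < m" "2^j * s \<le> dist z y" "dist z y < 2^Suc j * s"
        using dyadic_index[OF s d] by blast
      have zA: "z \<in> A j" using j by (simp add: A_def dist_commute)
      have "F z = 1 / lam y (dist z y)" using True by (simp add: F_def)
      also have "\<dots> \<le> 1 / lam y (2^j * s)"
        using P(3)[of "2^j * s" "dist z y" y] j lampos[of j] s
        by (intro divide_left_mono) (auto intro: mult_pos_pos)
      also have "\<dots> = indicator (A j) z * (1/lam y (2^j * s))" using zA by simp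
      also have "\<dots> \<le> G z" unfolding G_def using j lampos
        by (intro member_le_sum mult_nonneg_nonneg) (auto simp: less_imp_le)
      finally show ?thesis .
    qed
    have "integral\<^sup>L mu F \<le> integral\<^sup>L mu G"
      by (rule integral_mono[OF True intG FG])
    also have "integral\<^sup>L mu G = (\<Sum>j<m. measure mu (A j) * (1/lam y (2^j * s)))"
      unfolding G_def using intA
      by (subst Bochner_Integration.integral_sum) (auto simp: integral_mult_left_zero spc)
    also have "\<dots> \<le> (\<Sum>j<m. C)"
    proof (rule sum_mono)
      fix j assume "j \<in> {..<m}"
      have "measure mu (A j) \<le> measure mu (ball y (2*(2^j * s)))"
        by (rule measure_mono_fmeasurable) (use Afm[of j] P(5)[of "ball y (2*(2^j * s))"] in \<open>auto simp: A_def fmeasurable_def\<close>)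
      also have "\<dots> \<le> lam y (2*(2^j * s))" using P(4) s by simp
      also have "\<dots> \<le> C * lam y (2^j * s)" using C s by simp
      finally have "measure mu (A j) \<le> C * lam y (2^j * s)" .
      then show "measure mu (A j) * (1/lam y (2^j * s)) \<le> C"
        using lampos[of j] by (simp add: field_simps)
    qed
    also have "\<dots> = real m * C" by simp
    finally show ?thesis using int_eq by simp
  qed
qed

lemma loc_int_abs:
  fixes mu :: "'a::metric_space measure"
  assumes ud: "upper_doubling mu lam" and li: "loc_integrable mu f"
    and B: "bounded B" "B \<in> sets borel"
  shows "set_integrable mu B (\<lambda>z. \<bar>f z - a\<bar>)"
proof -
  note P = ud_props[OF ud]
  have "set_integrable mu B f" using li B unfolding loc_integrable_def by blast
  moreover have "set_integrable mu B (\<lambda>_. a)"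
    using P(5)[OF B] unfolding set_integrable_def fmeasurable_def by simp
  ultimately have "set_integrable mu B (\<lambda>z. f z - a)" by (rule set_integral_diff(1))
  then show ?thesis by (rule set_integrable_abs)
qed

lemma integral_lam_nonneg:
  fixes mu :: "'a::metric_space measure"
  assumes ud: "upper_doubling mu lam" and r: "r > 0"
  shows "0 \<le> (\<integral>y\<in>U - ball x r. 1 / lam x (dist y x) \<partial>mu)"
  unfolding set_lebesgue_integral_def
proof (rule integral_nonneg_AE, rule AE_I2)
  fix z
  show "0 \<le> indicator (U - ball x r) z *\<^sub>R (1 / lam x (dist z x))"
  proof (cases "z \<in> U - ball x r")
    case True
    then have "dist z x > 0" using r by (auto simp: dist_commute)
    then have "lam x (dist z x) > 0" using ud_props(2)[OF ud] by blast
    then show ?thesis using True by simp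
  qed simp
qed

lemma main:
  fixes mu :: "'a::metric_space measure"
  assumes gd: "geom_doubling TYPE('a)" and ud: "upper_doubling mu lam"
    and rho: "rho > 1" and sig: "sg > 1"
    and f: "f \<in> RBMO mu lam sg"
  shows "f \<in> RBMO mu lam rho"
proof -
  note P = ud_props[OF ud]
  have spc: "space mu = UNIV" using sets_eq_imp_space_eq[OF P(1)] by simp
  obtain Cl where Cl: "\<And>x r. r>0 \<Longrightarrow> lam x (2*r) \<le> Cl * lam x r"
    using ud unfolding upper_doubling_def by blast
  from f obtain A fB where li: "loc_integrable mu f" and adm: "RBMO_admissible mu lam sg f A fB"
    unfolding RBMO_def by blast
  have adm1: "\<And>x r. r>0 \<Longrightarrow> (\<integral>y\<in>ball x r. \<bar>f y - fB x r\<bar> \<partial>mu) \<le> A * measure mu (ball x (sg*r))"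
    and adm2: "\<And>x r x1 r1. r>0 \<Longrightarrow> r1>0 \<Longrightarrow> ball x r \<subseteq> ball x1 r1 \<Longrightarrow> \<bar>fB x r - fB x1 r1\<bar> \<le>
          A * (1 + (\<integral>y\<in>ball x1 (2*r1) - ball x r. 1 / lam x (dist y x) \<partial>mu))"
    using adm unfolding RBMO_admissible_def by auto
  have ballB: "ball y q - ball y' q' \<in> sets borel" for y y' :: 'a and q q'
    by (intro sets.Diff borel_open) auto
  have A0: "A \<ge> 0"
  proof -
    fix a :: 'a
    define I where "I = (\<integral>y\<in>ball a (2*1) - ball a 1. 1 / lam a (dist y a) \<partial>mu)"
    have I0: "I \<ge> 0" unfolding I_def by (rule integral_lam_nonneg[OF ud]) simp
    have "\<bar>fB a 1 - fB a 1\<bar> \<le> A * (1 + I)" unfolding I_def by (rule adm2) auto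
    then have "0 \<le> A * (1 + I)" by simp
    then show ?thesis using I0 by (simp add: zero_le_mult_iff)
  qed
  obtain N where N: "\<forall>k (x::'a) r. r > 0 \<longrightarrow> (\<exists>C. finite C \<and> card C \<le> N^k \<and> ball x r \<subseteq> (\<Union>c\<in>C. ball c (r/2^k)))"
    using cover_iter[OF gd] by blast
  obtain k :: nat where k: "(sg+1)/(rho-1) < 2^k" using real_arch_pow[of 2] by auto
  define tau :: real where "tau = 1/2^k"
  have taupos: "tau > 0" unfolding tau_def by simp
  have "sg + 1 < 2^k * (rho - 1)" using k rho by (simp add: field_simps)
  then have tau_bound: "1 + tau + sg*tau \<le> rho" using rho unfolding tau_def by (simp add: field_simps)
  obtain m1 :: nat where m1: "(2*rho+1+tau)/tau < 2^m1" using real_arch_pow[of 2] by auto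
  then have m1': "2*rho + 1 + tau < 2^m1 * tau" using taupos by (simp add: field_simps)
  obtain m2 :: nat where m2: "2*rho < 2^m2" using real_arch_pow[of 2] by auto
  define K where "K = 3 + real m1 * Cl + real m2 * Cl"
  have Clpos: "Cl > 0"
  proof -
    fix a :: 'a
    have "lam a (2*1) \<le> Cl * lam a 1" using Cl[of 1 a] by simp
    moreover have "lam a 2 > 0" "lam a 1 > 0" using P(2) by auto
    ultimately show ?thesis by (smt (verit) mult_nonpos_nonneg)
  qed
  have Kpos: "K > 0" unfolding K_def using Clpos by (simp add: add_pos_nonneg)
  define A' where "A' = max A (real (N^k) * A * K)"
  have first: "(\<integral>y\<in>ball x r. \<bar>f y - fB x r\<bar> \<partial>mu) \<le> A' * measure mu (ball x (rho*r))"
    if r: "r > 0" for x r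
  proof -
    define t where "t = r * tau"
    have tpos: "t > 0" using r taupos by (simp add: t_def)
    have t_eq: "r / 2^k = t" by (simp add: t_def tau_def)
    obtain C0 where C0: "finite C0" "card C0 \<le> N^k" "ball x r \<subseteq> (\<Union>c\<in>C0. ball c t)"
      using N r t_eq by metis
    define C' where "C' = {c\<in>C0. ball c t \<inter> ball x r \<noteq> {}}"
    have finC': "finite C'" using C0(1) by (simp add: C'_def)
    have cardC': "card C' \<le> N^k" using card_mono[OF C0(1), of C'] C0(2) by (auto simp: C'_def)
    have cov: "ball x r \<subseteq> (\<Union>c\<in>C'. ball c t)"
    proof
      fix z assume z: "z \<in> ball x r"
      then obtain c where "c \<in> C0" "z \<in> ball c t" using C0(3) by blast
      then show "z \<in> (\<Union>c\<in>C'. ball c t)" using z unfolding C'_def by blast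
    qed
    have dcx: "dist x c < r + t" if cC: "c \<in> C'" for c
    proof -
      obtain z where z: "z \<in> ball c t" "z \<in> ball x r" using cC unfolding C'_def by blast
      have "dist x c \<le> dist x z + dist z c" by (rule dist_triangle)
      then show ?thesis using z by (simp add: dist_commute)
    qed
    have sub1: "ball c (sg*t) \<subseteq> ball x (rho*r)" if "c \<in> C'" for c
    proof
      fix z assume "z \<in> ball c (sg*t)"
      then have "dist c z < sg * t" by simp
      moreover have "dist x z \<le> dist x c + dist c z" by (rule dist_triangle)
      moreover have "r + t + sg * t \<le> rho * r"
        using tau_bound r mult_right_mono[OF tau_bound, of r] by (simp add: t_def algebra_simps)
      ultimately show "z \<in> ball x (rho*r)" using dcx[OF that] by simp
    qed
    have sub2: "ball c t \<subseteq> ball x (rho*r)" if "c \<in> C'" for c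
      using sub1[OF that] sig tpos by (smt (verit, best) mult_le_cancel_right1 subset_ball subset_trans)
    have sub3: "ball x r \<subseteq> ball x (rho*r)" using rho r by (intro subset_ball) simp
    define mr where "mr = measure mu (ball x (rho*r))"
    have mr0: "mr \<ge> 0" by (simp add: mr_def)
    have bfm: "ball y q \<in> fmeasurable mu" for y :: 'a and q
      by (rule P(5)) auto
    have mball: "measure mu (ball y q) \<le> mr" if "ball y q \<subseteq> ball x (rho*r)" for y q
      unfolding mr_def using that bfm by (intro measure_mono_fmeasurable) (auto simp: fmeasurable_def)
    define h where "h z = \<bar>f z - fB x r\<bar>" for z
    have hint: "set_integrable mu (ball y q) h" for y q
      unfolding h_def by (rule loc_int_abs[OF ud li]) auto
    have step_a: "(\<integral>z\<in>ball x r. h z \<partial>mu) \<le> (\<Sum>c\<in>C'. (\<integral>z\<in>ball c t. h z \<partial>mu))"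
    proof -
      have "(\<integral>z\<in>ball x r. h z \<partial>mu) = integral\<^sup>L mu (\<lambda>z. indicator (ball x r) z * h z)"
        by (simp add: set_lebesgue_integral_def)
      also have "\<dots> \<le> integral\<^sup>L mu (\<lambda>z. \<Sum>c\<in>C'. indicator (ball c t) z * h z)"
      proof (rule integral_mono)
        show "integrable mu (\<lambda>z. indicator (ball x r) z * h z)"
          using hint[of x r] by (simp add: set_integrable_def)
        show "integrable mu (\<lambda>z. \<Sum>c\<in>C'. indicator (ball c t) z * h z)"
          by (rule Bochner_Integration.integrable_sum) (use hint in \<open>simp add: set_integrable_def\<close>)
        fix z
        show "indicator (ball x r) z * h z \<le> (\<Sum>c\<in>C'. indicator (ball c t) z * h z)"
        proof (cases "z \<in> ball x r")
          case False
          then show ?thesis by (auto intro!: sum_nonneg simp: h_def)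
        next
          case True
          then obtain c where c: "c \<in> C'" "z \<in> ball c t" using cov by blast
          have "indicator (ball x r) z * h z = indicator (ball c t) z * h z" using True c by simp
          also have "\<dots> \<le> (\<Sum>c\<in>C'. indicator (ball c t) z * h z)"
            using finC' c by (intro member_le_sum) (auto simp: h_def)
          finally show ?thesis .
        qed
      qed
      also have "\<dots> = (\<Sum>c\<in>C'. integral\<^sup>L mu (\<lambda>z. indicator (ball c t) z * h z))"
        by (rule Bochner_Integration.integral_sum) (use hint in \<open>simp add: set_integrable_def\<close>)
      also have "\<dots> = (\<Sum>c\<in>C'. (\<integral>z\<in>ball c t. h z \<partial>mu))"
        by (simp add: set_lebesgue_integral_def)
      finally show ?thesis .
    qed
    have step_b: "(\<integral>z\<in>ball c t. h z \<partial>mu) \<le> A * K * mr" if c: "c \<in> C'" for c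
    proof -
      have cint: "set_integrable mu (ball c t) (\<lambda>_. \<bar>fB c t - fB x r\<bar>)"
        using bfm[of c t] unfolding set_integrable_def fmeasurable_def by simp
      have gint: "set_integrable mu (ball c t) (\<lambda>z. \<bar>f z - fB c t\<bar>)"
        by (rule loc_int_abs[OF ud li]) auto
      have "(\<integral>z\<in>ball c t. h z \<partial>mu) \<le> (\<integral>z\<in>ball c t. \<bar>f z - fB c t\<bar> + \<bar>fB c t - fB x r\<bar> \<partial>mu)"
        by (rule set_integral_mono[OF hint set_integral_add(1)[OF gint cint]]) (auto simp: h_def)
      also have "\<dots> = (\<integral>z\<in>ball c t. \<bar>f z - fB c t\<bar> \<partial>mu) + measure mu (ball c t) * \<bar>fB c t - fB x r\<bar>"
      proof -
        have em: "emeasure mu (ball c t) \<noteq> \<infinity>" "ball c t \<in> sets mu" using bfm[of c t] by (auto simp: fmeasurable_def)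
        show ?thesis using set_integral_add(2)[OF gint cint] set_integral_const[OF em(2) em(1), of "\<bar>fB c t - fB x r\<bar>"]
          by simp
      qed
      also have "\<dots> \<le> A * mr + mr * (A * (1 + real m1 * Cl) + A * (1 + real m2 * Cl))"
      proof (rule add_mono)
        have "(\<integral>z\<in>ball c t. \<bar>f z - fB c t\<bar> \<partial>mu) \<le> A * measure mu (ball c (sg*t))"
          by (rule adm1[OF tpos])
        also have "\<dots> \<le> A * mr" using mball[OF sub1[OF c]] A0 by (rule mult_left_mono)
        finally show "(\<integral>z\<in>ball c t. \<bar>f z - fB c t\<bar> \<partial>mu) \<le> A * mr" .
        have I1: "(\<integral>y\<in>ball x (2*(rho*r)) - ball c t. 1 / lam c (dist y c) \<partial>mu) \<le> real m1 * Cl"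
        proof (rule annulus[OF ud Cl tpos ballB])
          show "ball x (2*(rho*r)) - ball c t \<subseteq> ball c (2^m1 * t) - ball c t"
          proof
            fix z assume z: "z \<in> ball x (2*(rho*r)) - ball c t"
            have "dist c z \<le> dist c x + dist x z" by (rule dist_triangle)
            moreover have "dist c x < r + t" using dcx[OF c] by (simp add: dist_commute)
            moreover have "r * (2*rho + 1 + tau) < r * (2^m1 * tau)" using m1' r by simp
            ultimately show "z \<in> ball c (2^m1 * t) - ball c t" using z
              by (simp add: t_def algebra_simps)
          qed
        qed
        have I2: "(\<integral>y\<in>ball x (2*(rho*r)) - ball x r. 1 / lam x (dist y x) \<partial>mu) \<le> real m2 * Cl"
        proof (rule annulus[OF ud Cl r ballB])
          show "ball x (2*(rho*r)) - ball x r \<subseteq> ball x (2^m2 * r) - ball x r"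
            using m2 r by (intro Diff_mono subset_ball) auto
        qed
        have e1: "\<bar>fB c t - fB x (rho*r)\<bar> \<le> A * (1 + real m1 * Cl)"
          using adm2[OF tpos _ sub2[OF c]] rho r I1 A0
          by (smt (verit, best) mult_left_mono mult_pos_pos)
        have e2: "\<bar>fB x r - fB x (rho*r)\<bar> \<le> A * (1 + real m2 * Cl)"
          using adm2[OF r _ sub3] rho r I2 A0
          by (smt (verit, best) mult_left_mono mult_pos_pos)
        have "\<bar>fB c t - fB x r\<bar> \<le> A * (1 + real m1 * Cl) + A * (1 + real m2 * Cl)"
          using e1 e2 by linarith
        then show "measure mu (ball c t) * \<bar>fB c t - fB x r\<bar> \<le> mr * (A * (1 + real m1 * Cl) + A * (1 + real m2 * Cl))"
          using mball[OF sub2[OF c]] mr0 by (intro mult_mono) auto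
      qed
      also have "\<dots> = A * K * mr" by (simp add: K_def algebra_simps)
      finally show ?thesis .
    qed
    have K0: "A * K * mr \<ge> 0" using A0 Kpos mr0 by simp
    have "(\<integral>y\<in>ball x r. \<bar>f y - fB x r\<bar> \<partial>mu) = (\<integral>z\<in>ball x r. h z \<partial>mu)" by (simp add: h_def)
    also have "\<dots> \<le> (\<Sum>c\<in>C'. A * K * mr)" 
      using step_a sum_mono[of C' "\<lambda>c. (\<integral>z\<in>ball c t. h z \<partial>mu)" "\<lambda>_. A*K*mr", OF step_b] by linarith
    also have "\<dots> = real (card C') * (A * K * mr)" by simp
    also have "\<dots> \<le> real (N^k) * (A * K * mr)" using cardC' K0 by (intro mult_right_mono) auto
    also have "\<dots> \<le> A' * mr" unfolding A'_def using mr0 mult_right_mono[OF max.cobounded2[of "real (N^k) * A * K" A] mr0]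
      by (simp add: mult.assoc)
    finally show ?thesis by (simp add: mr_def)
  qed
  have second: "\<bar>fB x r - fB x1 r1\<bar> \<le> A' * (1 + (\<integral>y\<in>ball x1 (2*r1) - ball x r. 1 / lam x (dist y x) \<partial>mu))"
    if "r > 0" "r1 > 0" "ball x r \<subseteq> ball x1 r1" for x r x1 r1
  proof -
    have "0 \<le> (\<integral>y\<in>ball x1 (2*r1) - ball x r. 1 / lam x (dist y x) \<partial>mu)"
      by (rule integral_lam_nonneg[OF ud that(1)])
    moreover have "A \<le> A'" by (simp add: A'_def)
    ultimately show ?thesis using adm2[OF that] by (smt (verit) mult_right_mono)
  qed
  show ?thesis using li first second unfolding RBMO_def RBMO_admissible_def by blast
qed

theorem lemma4p4:
  fixes mu :: "'a::metric_space measure" and lam :: "'a \<Rightarrow> real \<Rightarrow> real"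
    and rho sigma :: real
  assumes "geom_doubling TYPE('a)"
    and "upper_doubling mu lam"
    and "rho > 1" and "sigma > 1"
  shows "RBMO mu lam rho = RBMO mu lam sigma"
proof (intro equalityI subsetI)
  fix f assume "f \<in> RBMO mu lam rho"
  then show "f \<in> RBMO mu lam sigma" by (rule main[OF assms(1,2,4,3)])
next
  fix f assume "f \<in> RBMO mu lam sigma"
  then show "f \<in> RBMO mu lam rho" by (rule main[OF assms(1,2,3,4)])
qed

end
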